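(* Assume (A3) and (A4), and let $\rho\in[0,\epsilon]$. Let $x\in R\mathbb{B}$ and $s\in\partial g(x)$ with $s\ne0$, and set $$x^+=\Pi_{R\mathbb{B}}\Big(x-\frac{[g(x)+\rho]_+}{\|s\|^2}s\Big).$$ Then $$\mathrm{dist}^2(x^+,\mathcal{X}_\rho)\le\Big(1-\frac{\sigma^2}{G_g^2}\Big)\mathrm{dist}^2(x,\mathcal{X}_\rho).$$
   Context: Let $g:\mathbb{R}^d\to\mathbb{R}$ be convex with subdifferential $\partial g(x)$. Let $R>0$ and $\mathbb{B}=\{x\in\mathbb{R}^d:\|x\|\le1\}$, with $\|\cdot\|$ the Euclidean norm. Set $\mathcal{X}=\{x:g(x)\le0\}$ and assume $\mathcal{X}\subseteq R\mathbb{B}$. For $\rho\ge0$ set $\mathcal{X}_\rho=\{x:g(x)\le-\rho\}$. $\Pi_{\mathcal{Y}}$ denotes Euclidean projection onto a closed convex set $\mathcal{Y}$. Write $\mathrm{dist}(z,\mathcal{Y})=\min_{y\in\mathcal{Y}}\|z-y\|$ and $[a]_+=\max(a,0)$. Assumptions: (A3) there is $G_g>0$ with $\|s\|\le G_g$ for all $s\in\partial g(x)$ and all $x\in R\mathbb{B}$; (A4) there are $\sigma,\epsilon>0$ such that $\{x:g(x)=-\epsilon\}$ is nonempty and $\|s\|\ge\sigma$ for all $s\in\partial g(x)$ whenever $g(x)=-\epsilon$. *)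

theory Defs
  imports "HOL-Analysis.Analysis"
begin

definition subdifferential :: "('a::real_inner \<Rightarrow> real) \<Rightarrow> 'a \<Rightarrow> 'a set" where
  "subdifferential g x = {s. \<forall>y. g y \<ge> g x + inner s (y - x)}"

definition sublevel :: "('a \<Rightarrow> real) \<Rightarrow> real \<Rightarrow> 'a set" where
  "sublevel g \<rho> = {x. g x \<le> - \<rho>}"

end

theory Submission
  imports Defs
begin

lemma norm_step: fixes a s :: "'a::real_inner"
  shows "(norm (a - c *\<^sub>R s))\<^sup>2 = (norm a)\<^sup>2 - 2 * c * inner s a + c * (c * (norm s)\<^sup>2)"
  unfolding power2_norm_eq_inner
  by (simp add: inner_diff_left inner_diff_right inner_commute algebra_simps)

lemma sep_subgrad:
  fixes g :: "'a::euclidean_space \<Rightarrow> real"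
  assumes cv: "convex_on UNIV g" and D: "D > 0" and q: "q \<in> cball x D"
    and ball: "\<And>y. dist x y < D \<Longrightarrow> g y > c" and gq: "g q = c"
  shows "\<exists>t. t \<in> subdifferential g q \<and> (\<forall>y\<in>cball x D. inner t (y - q) \<ge> 0)"
proof -
  let ?S = "ball x D \<times> {..<c}"
  let ?T = "epigraph UNIV g"
  have cS: "convex ?S" by (intro convex_Times convex_ball) (simp add: convex_real_interval)
  have cT: "convex ?T" using cv by (rule convex_epigraphI)
  have nS: "?S \<noteq> {}" using D by auto
  have nT: "?T \<noteq> {}" by (auto simp: epigraph_def)
  have dj: "?S \<inter> ?T = {}"
  proof (rule ccontr)
    assume "?S \<inter> ?T \<noteq> {}"
    then obtain y r where "dist x y < D" "r < c" "g y \<le> r" by (auto simp: epigraph_def)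
    with ball[of y] show False by auto
  qed
  obtain a b where ab: "a \<noteq> 0" "\<forall>p\<in>?S. inner a p \<le> b" "\<forall>p\<in>?T. inner a p \<ge> b"
    using separating_hyperplane_sets[OF cS cT nS nT dj] by blast
  obtain w c0 where a: "a = (w, c0)" by (cases a)
  have "closure ?S \<subseteq> {p. inner a p \<le> b}"
    by (rule closure_minimal) (use ab(2) closed_halfspace_le in auto)
  moreover have "closure ?S = cball x D \<times> {..c}" using D by (simp add: closure_Times)
  ultimately have A0: "cball x D \<times> {..c} \<subseteq> {p. inner a p \<le> b}" by simp
  have A: "\<And>y. y \<in> cball x D \<Longrightarrow> inner w y + c0 * c \<le> b"
  proof -
    fix y assume "y \<in> cball x D"
    hence "(y, c) \<in> cball x D \<times> {..c}" by simp
    with A0 have "inner a (y, c) \<le> b" by blast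
    thus "inner w y + c0 * c \<le> b" using a by (simp add: inner_Pair)
  qed
  have B: "\<And>y r. g y \<le> r \<Longrightarrow> inner w y + c0 * r \<ge> b"
    using ab(3) a by (auto simp: epigraph_def)
  have Aq: "inner w q + c0 * g q \<le> b" using A[OF q] gq by simp
  have Bq: "inner w q + c0 * g q \<ge> b" using B[of q "g q"] by simp
  have "c0 \<ge> 0"
    using B[of q "g q + 1"] Aq by (simp add: algebra_simps)
  moreover have "c0 \<noteq> 0"
  proof
    assume c00: "c0 = 0"
    have "inner w (q - w) \<ge> b" using B[of "q - w" "g (q - w)"] c00 by simp
    with Aq c00 have "inner w w \<le> 0" by (simp add: inner_diff_right)
    hence "w = 0" by (metis inner_gt_zero_iff not_le)
    with c00 a ab(1) show False by (simp add: zero_prod_def)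
  qed
  ultimately have c0: "c0 > 0" by simp
  define t where "t = - (1 / c0) *\<^sub>R w"
  have "t \<in> subdifferential g q"
    unfolding subdifferential_def
  proof safe
    fix y
    have "inner w y + c0 * g y \<ge> inner w q + c0 * g q" using B[of y "g y"] Aq by simp
    hence "c0 * g y \<ge> c0 * g q - inner w (y - q)" by (simp add: inner_diff_right)
    hence "g y \<ge> g q - inner w (y - q) / c0" using c0 by (simp add: field_simps)
    thus "g q + inner t (y - q) \<le> g y" by (simp add: t_def)
  qed
  moreover have "\<forall>y\<in>cball x D. inner t (y - q) \<ge> 0"
  proof
    fix y assume "y \<in> cball x D"
    hence "inner w y \<le> inner w q" using A[of y] Bq gq by simp
    hence "inner w (y - q) \<le> 0" by (simp add: inner_diff_right)
    thus "inner t (y - q) \<ge> 0" using c0 by (simp add: t_def divide_nonpos_pos)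
  qed
  ultimately show ?thesis by blast
qed


lemma err_bound:
  fixes g :: "'a::euclidean_space \<Rightarrow> real"
  assumes cv: "convex_on UNIV g"
    and A4: "\<sigma> > 0" "\<epsilon> > 0" "{y. g y = - \<epsilon>} \<noteq> {}"
        "\<And>y t. g y = - \<epsilon> \<Longrightarrow> t \<in> subdifferential g y \<Longrightarrow> norm t \<ge> \<sigma>"
    and rho: "0 \<le> \<rho>" "\<rho> \<le> \<epsilon>"
    and gx: "g x > - \<rho>"
  shows "\<exists>z. g z \<le> - \<rho> \<and> \<sigma> * dist x z \<le> g x + \<rho>"
proof -
  have cont: "continuous_on UNIV g" using convex_on_continuous[OF open_UNIV cv] .
  let ?E = "{y. g y \<le> - \<epsilon>}"
  have clE: "closed ?E" using cont by (intro closed_Collect_le) (auto intro: continuous_intros)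
  have neE: "?E \<noteq> {}" using A4(3) by (metis (mono_tags, lifting) Collect_empty_eq order_refl)
  define q where "q = closest_point ?E x"
  have qE: "g q \<le> - \<epsilon>" using closest_point_in_set[OF clE neE] q_def by simp
  have qmin: "\<And>y. g y \<le> - \<epsilon> \<Longrightarrow> dist x q \<le> dist x y"
    using closest_point_le[OF clE] q_def by simp
  define D where "D = dist x q"
  have gxe: "g x > - \<epsilon>" using gx rho by simp
  have "x \<noteq> q" using qE gxe by auto
  hence D: "D > 0" by (simp add: D_def)
  have ball: "\<And>y. dist x y < D \<Longrightarrow> g y > - \<epsilon>"
    using qmin D_def by (metis not_le)
  have gq: "g q = - \<epsilon>"
  proof (rule ccontr)
    assume "g q \<noteq> - \<epsilon>"
    with qE have lt: "g q < - \<epsilon>" by simp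
    define \<tau> where "\<tau> = (- \<epsilon> - g q) / (g x - g q)"
    have t0: "\<tau> > 0" "\<tau> < 1" using lt gxe by (auto simp: \<tau>_def field_simps)
    define y where "y = (1 - \<tau>) *\<^sub>R q + \<tau> *\<^sub>R x"
    have "g y \<le> (1 - \<tau>) * g q + \<tau> * g x"
      using convex_onD[OF cv, of \<tau> q x] t0 by (simp add: y_def)
    also have "\<dots> = g q + \<tau> * (g x - g q)" by (simp add: algebra_simps)
    also have "\<tau> * (g x - g q) = - \<epsilon> - g q" using lt gxe by (simp add: \<tau>_def)
    also have "g q + (- \<epsilon> - g q) = - \<epsilon>" by simp
    finally have "g y \<le> - \<epsilon>" .
    moreover have "x - y = (1 - \<tau>) *\<^sub>R (x - q)" by (simp add: y_def algebra_simps)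
    hence "dist x y = (1 - \<tau>) * D" using t0 by (simp add: dist_norm D_def)
    hence "dist x y < D" using t0 D by (simp add: mult_less_cancel_right1)
    ultimately show False using ball by force
  qed
  obtain t where t: "t \<in> subdifferential g q" "\<forall>y\<in>cball x D. inner t (y - q) \<ge> 0"
    using sep_subgrad[OF cv D, where q=q and c="- \<epsilon>" and x=x] ball gq by (auto simp: D_def)
  have nt: "norm t \<ge> \<sigma>" using A4(4)[OF gq t(1)] .
  hence tnz: "t \<noteq> 0" using A4(1) by auto
  define y where "y = x - (D / norm t) *\<^sub>R t"
  have "dist x y = D" using tnz D by (simp add: y_def dist_norm)
  hence "inner t (y - q) \<ge> 0" using t(2) by simp
  hence "inner t (x - q) - D / norm t * inner t t \<ge> 0"
    by (simp add: y_def inner_diff_right algebra_simps)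
  moreover have "D / norm t * inner t t = D * norm t"
    using tnz by (simp add: power2_norm_eq_inner[symmetric] power2_eq_square)
  ultimately have i1: "inner t (x - q) \<ge> D * norm t" by simp
  have "g x \<ge> g q + inner t (x - q)" using t(1) by (simp add: subdifferential_def)
  moreover have "D * norm t \<ge> D * \<sigma>" using nt D by simp
  ultimately have gxD: "g x + \<epsilon> \<ge> \<sigma> * D" using i1 gq by (simp add: mult.commute)
  define u where "u = (\<epsilon> - \<rho>) / (g x + \<epsilon>)"
  have u: "u \<ge> 0" "u \<le> 1" using rho gxe gx by (auto simp: u_def field_simps)
  define z where "z = (1 - u) *\<^sub>R q + u *\<^sub>R x"
  have "g z \<le> (1 - u) * g q + u * g x"
    using convex_onD[OF cv, of u q x] u by (simp add: z_def)
  also have "\<dots> = - \<epsilon> + u * (g x + \<epsilon>)" using gq by (simp add: algebra_simps)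
  also have "u * (g x + \<epsilon>) = \<epsilon> - \<rho>" using gxe by (simp add: u_def)
  also have "- \<epsilon> + (\<epsilon> - \<rho>) = - \<rho>" by simp
  finally have gz: "g z \<le> - \<rho>" .
  have "x - z = (1 - u) *\<^sub>R (x - q)" by (simp add: z_def algebra_simps)
  hence dz: "dist x z = (1 - u) * D" using u by (simp add: dist_norm D_def)
  have "\<sigma> * dist x z = (1 - u) * (\<sigma> * D)" using dz by simp
  also have "\<dots> \<le> (1 - u) * (g x + \<epsilon>)" using gxD u by (intro mult_left_mono) auto
  also have "\<dots> = g x + \<rho>" using gxe by (simp add: u_def field_simps)
  finally show ?thesis using gz by blast
qed

theorem lemma2:
  fixes g :: "'a::euclidean_space \<Rightarrow> real"
    and R G\<^sub>g \<sigma> \<epsilon> \<rho> :: real and x s :: 'a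
  assumes convex: "convex_on UNIV g"
    and R_pos: "R > 0"
    and X_bounded: "sublevel g 0 \<subseteq> cball 0 R"
    and A3: "G\<^sub>g > 0" "\<And>y t. y \<in> cball 0 R \<Longrightarrow> t \<in> subdifferential g y \<Longrightarrow> norm t \<le> G\<^sub>g"
    and A4: "\<sigma> > 0" "\<epsilon> > 0" "{y. g y = - \<epsilon>} \<noteq> {}"
        "\<And>y t. g y = - \<epsilon> \<Longrightarrow> t \<in> subdifferential g y \<Longrightarrow> norm t \<ge> \<sigma>"
    and rho: "0 \<le> \<rho>" "\<rho> \<le> \<epsilon>"
    and x: "x \<in> cball 0 R"
    and s: "s \<in> subdifferential g x" "s \<noteq> 0"
  shows "(infdist (closest_point (cball 0 R)
                     (x - (max (g x + \<rho>) 0 / (norm s)\<^sup>2) *\<^sub>R s))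
                   (sublevel g \<rho>))\<^sup>2
         \<le> (1 - \<sigma>\<^sup>2 / G\<^sub>g\<^sup>2) * (infdist x (sublevel g \<rho>))\<^sup>2"
proof -
  let ?X = "sublevel g \<rho>"
  define h where "h = g x + \<rho>"
  show ?thesis
  proof (cases "h \<le> 0")
    case True
    hence "max (g x + \<rho>) 0 = 0" by (simp add: h_def)
    moreover have "x \<in> ?X" using True by (simp add: h_def sublevel_def)
    ultimately show ?thesis using x by (simp add: closest_point_self)
  next
    case False
    hence hpos: "h > 0" by simp
    obtain z where z: "g z \<le> - \<rho>" "\<sigma> * dist x z \<le> g x + \<rho>"
    proof -
      have "\<exists>z. g z \<le> - \<rho> \<and> \<sigma> * dist x z \<le> g x + \<rho>"
        by (rule err_bound[OF convex A4(1-3) _ rho]) (use A4(4) hpos h_def in auto)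
      thus ?thesis using that by blast
    qed
    have cont: "continuous_on UNIV g" using convex_on_continuous[OF open_UNIV convex] .
    have clX: "closed ?X" unfolding sublevel_def
      using cont by (intro closed_Collect_le) (auto intro: continuous_intros)
    have zX: "z \<in> ?X" using z by (simp add: sublevel_def)
    hence neX: "?X \<noteq> {}" by auto
    define p where "p = closest_point ?X x"
    have pX: "p \<in> ?X" using closest_point_in_set[OF clX neX] p_def by simp
    have pz: "dist x p \<le> dist x z" using closest_point_le[OF clX zX] p_def by simp
    have dp: "infdist x ?X = dist x p"
    proof (rule antisym)
      show "infdist x ?X \<le> dist x p" using infdist_le[OF pX] .
      show "dist x p \<le> infdist x ?X" unfolding infdist_notempty[OF neX]
        by (rule cINF_greatest[OF neX]) (use closest_point_le[OF clX] p_def in auto)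
    qed
    have gp: "g p \<le> - \<rho>" using pX by (simp add: sublevel_def)
    have "p \<in> sublevel g 0" using gp rho by (simp add: sublevel_def)
    hence pB: "p \<in> cball 0 R" using X_bounded by blast
    have sG: "norm s \<le> G\<^sub>g" using A3(2)[OF x s(1)] .
    have sp: "norm s > 0" using s(2) by simp
    define \<alpha> where "\<alpha> = h / (norm s)\<^sup>2"
    define z' where "z' = x - \<alpha> *\<^sub>R s"
    have mx: "max (g x + \<rho>) 0 = h" using hpos by (simp add: h_def)
    define xp where "xp = closest_point (cball 0 R) z'"
    have d1: "dist xp p \<le> dist z' p"
      using closest_point_lipschitz[of "cball 0 R" z' p] closest_point_self[OF pB] R_pos
      by (simp add: xp_def)
    have inner_ge: "inner s (x - p) \<ge> h"
    proof -
      have "g p \<ge> g x + inner s (p - x)" using s(1) by (simp add: subdifferential_def)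
      moreover have "inner s (p - x) = - inner s (x - p)" by (simp add: inner_diff_right)
      ultimately show ?thesis using gp by (simp add: h_def)
    qed
    have an: "\<alpha> * (norm s)\<^sup>2 = h" using sp by (simp add: \<alpha>_def)
    have apos: "\<alpha> > 0" using hpos sp by (simp add: \<alpha>_def)
    have "(dist z' p)\<^sup>2 = (norm ((x - p) - \<alpha> *\<^sub>R s))\<^sup>2"
      by (simp add: dist_norm z'_def algebra_simps)
    also have "\<dots> = (norm (x - p))\<^sup>2 - 2 * \<alpha> * inner s (x - p) + \<alpha> * (\<alpha> * (norm s)\<^sup>2)"
      by (rule norm_step)
    also have "\<dots> \<le> (norm (x - p))\<^sup>2 - 2 * \<alpha> * h + \<alpha> * h"
      using inner_ge apos an by simp
    also have "\<dots> = (dist x p)\<^sup>2 - h\<^sup>2 / (norm s)\<^sup>2"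
      by (simp add: dist_norm \<alpha>_def power2_eq_square)
    finally have d2: "(dist z' p)\<^sup>2 \<le> (dist x p)\<^sup>2 - h\<^sup>2 / (norm s)\<^sup>2" .
    have "h\<^sup>2 / G\<^sub>g\<^sup>2 \<le> h\<^sup>2 / (norm s)\<^sup>2"
      using sG sp A3(1) by (intro divide_left_mono power_mono) auto
    moreover have "\<sigma> * dist x p \<le> h" using pz z(2) A4(1) h_def
      by (metis mult_left_mono less_imp_le order_trans)
    hence "(\<sigma> * dist x p)\<^sup>2 \<le> h\<^sup>2" using A4(1) by (intro power_mono) auto
    hence "\<sigma>\<^sup>2 * (dist x p)\<^sup>2 / G\<^sub>g\<^sup>2 \<le> h\<^sup>2 / G\<^sub>g\<^sup>2"
      by (intro divide_right_mono) (auto simp: power_mult_distrib)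
    ultimately have d3: "(dist z' p)\<^sup>2 \<le> (1 - \<sigma>\<^sup>2 / G\<^sub>g\<^sup>2) * (dist x p)\<^sup>2"
      using d2 by (simp add: algebra_simps)
    have "infdist xp ?X \<le> dist xp p" using infdist_le[OF pX] .
    hence "(infdist xp ?X)\<^sup>2 \<le> (dist xp p)\<^sup>2" by (intro power_mono) (auto simp: infdist_nonneg)
    also have "\<dots> \<le> (dist z' p)\<^sup>2" using d1 by (intro power_mono) auto
    finally show ?thesis using d3 dp mx by (simp add: xp_def z'_def \<alpha>_def)
  qed
qed

end
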